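(* Let $\xi=(\xi_0\xi_1\ldots\xi_{m-1})^{\mathbb Z}\in\Sigma_2\setminus\{0^{\mathbb Z}\}$ be a periodic sequence such that the map $g=f_{[\xi_0\ldots\xi_{m-1}]}$ has a repelling fixed point $q$. Then $I_{[\xi]}$ is a non-trivial interval, and it contains points $p_\infty<q<\widetilde p_\infty$ which are fixed points of $g^2$.
   Context: Let $f_0,f_1\colon[0,1]\to[0,1]$ be $C^1$ injective maps such that: (F0.i) $f_0$ is increasing and has exactly two fixed points $0$ and $1$, both hyperbolic, with $f_0'(0)=\beta>1$, $f_0'(1)=\lambda\in(0,1)$ and $\lambda\le f_0'(x)\le\beta$ for all $x\in[0,1]$; (F0.ii) there are intervals $I_0=[a_0,b_0]\subset(0,1)$ with $b_0=f_0(a_0)$ and $I_1=[a_1,b_1]$ with $b_1=f_0(a_1)$, and numbers $\alpha>1$, $N\ge1$, with $f_0^N(I_0)=I_1$ and $\lambda\,(f_0^N)'(x)>\alpha$ for all $x\in I_0$; moreover $f_0$ is expanding on $[0,b_0]$ and contracting on $[a_1,1]$; (F1.i) $f_1$ is decreasing with $\gamma'=\min_{[0,1]}|f_1'|\le\gamma=\max_{[0,1]}|f_1'|<1$; (F1.ii) $|f_1'(x)|\ge\bar\alpha>1/\alpha$ for all $x\in[f_1^2(a_1),a_1]$; (F01) $f_1(1)=0$, $f_1([a_1,1])\subset[0,a_0)$, and $[0,f_0^{-2}(b_0))\subset f_1([0,1])$. For a finite word, $f_{[\xi_0\ldots\xi_n]}=f_{\xi_n}\circ\cdots\circ f_{\xi_0}$.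 $\Sigma_2=\{0,1\}^{\mathbb Z}$; $(\xi_0\ldots\xi_{m-1})^{\mathbb Z}$ is the periodic sequence with $\xi_{i+m}=\xi_i$ for all $i$. For $\xi\in\Sigma_2$ the admissible domain is $I_{[\xi]}=\bigcap_{k\ge1}f_{\xi_{-1}}\circ\cdots\circ f_{\xi_{-k}}([0,1])$ (a point or a non-trivial compact interval). *)

theory Defs
  imports "HOL-Analysis.Analysis"
begin

definition fmap :: "(real \<Rightarrow> real) \<Rightarrow> (real \<Rightarrow> real) \<Rightarrow> nat \<Rightarrow> real \<Rightarrow> real" where
  "fmap f0 f1 i = (if i = 0 then f0 else f1)"

text \<open>f_[w0 ... wn] = f_wn o ... o f_w0 (w0 is applied first).\<close>
definition word_map :: "(real \<Rightarrow> real) \<Rightarrow> (real \<Rightarrow> real) \<Rightarrow> nat list \<Rightarrow> real \<Rightarrow> real" where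
  "word_map f0 f1 w = fold (fmap f0 f1) w"

definition periodic_seq :: "nat list \<Rightarrow> int \<Rightarrow> nat" where
  "periodic_seq xs = (\<lambda>i. xs ! nat (i mod int (length xs)))"

text \<open>back_comp f0 f1 xi k = f_{xi_{-1}} o ... o f_{xi_{-k}}.\<close>
fun back_comp :: "(real \<Rightarrow> real) \<Rightarrow> (real \<Rightarrow> real) \<Rightarrow> (int \<Rightarrow> nat) \<Rightarrow> nat \<Rightarrow> real \<Rightarrow> real" where
  "back_comp f0 f1 xi 0 = id"
| "back_comp f0 f1 xi (Suc k) = back_comp f0 f1 xi k \<circ> fmap f0 f1 (xi (- (int k + 1)))"

definition admissible_domain :: "(real \<Rightarrow> real) \<Rightarrow> (real \<Rightarrow> real) \<Rightarrow> (int \<Rightarrow> nat) \<Rightarrow> real set" where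
  "admissible_domain f0 f1 xi = (\<Inter>k\<in>{1..}. back_comp f0 f1 xi k ` {0..1})"

end

theory Submission imports Defs begin

lemma fold_props:
  assumes "continuous_on {0..1} f0" "f0 ` {0..1} \<subseteq> {0..1}" "inj_on f0 {0..1}"
    "continuous_on {0..1} f1" "f1 ` {0..1} \<subseteq> {0..1}" "inj_on f1 {0..1}"
  shows "continuous_on {0..1::real} (fold (fmap f0 f1) l) \<and> fold (fmap f0 f1) l ` {0..1} \<subseteq> {0..1}
     \<and> inj_on (fold (fmap f0 f1) l) {0..1}"
proof (induction l)
  case Nil
  then show ?case by simp
next
  case (Cons a l)
  have F: "continuous_on {0..1::real} (fmap f0 f1 a) \<and> fmap f0 f1 a ` {0..1} \<subseteq> {0..1}
     \<and> inj_on (fmap f0 f1 a) {0..1}" using assms by (simp add: fmap_def)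
  have "continuous_on {0..1} (fold (fmap f0 f1) l \<circ> fmap f0 f1 a)"
    using F Cons.IH by (meson continuous_on_compose continuous_on_subset)
  moreover have "(fold (fmap f0 f1) l \<circ> fmap f0 f1 a) ` {0..1} \<subseteq> {0..1}"
    using F Cons.IH by (auto simp: image_comp[symmetric] image_subset_iff)
  moreover have "inj_on (fold (fmap f0 f1) l \<circ> fmap f0 f1 a) {0..1}"
    using F Cons.IH by (meson comp_inj_on inj_on_subset)
  ultimately show ?case by (simp only: fold_Cons)
qed

lemma back_comp_fold:
  "back_comp f0 f1 xi k = fold (fmap f0 f1) (rev (map (\<lambda>i. xi (- (int i + 1))) [0..<k]))"
  by (induction k) auto

lemma back_comp_add:
  "back_comp f0 f1 xi (n + k) = back_comp f0 f1 xi n \<circ> back_comp f0 f1 (\<lambda>i. xi (i - int n)) k"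
proof (induction k)
  case 0
  then show ?case by simp
next
  case (Suc k)
  have e: "- int n - int k - 1 = - int k - 1 - int n" by simp
  show ?case using Suc by (simp add: e comp_assoc)
qed

lemma periodic_shift:
  "(\<lambda>i. periodic_seq xs (i - int (length xs))) = periodic_seq xs"
  by (auto simp: periodic_seq_def mod_diff_right_eq[symmetric])

lemma back_comp_period:
  assumes "xs \<noteq> []"
  shows "back_comp f0 f1 (periodic_seq xs) (length xs) = word_map f0 f1 xs"
proof -
  have "rev (map (\<lambda>i. periodic_seq xs (- (int i + 1))) [0..<length xs]) = xs"
  proof (rule nth_equalityI)
    fix j assume j: "j < length (rev (map (\<lambda>i. periodic_seq xs (- (int i + 1))) [0..<length xs]))"
    then have j': "j < length xs" by simp
    have e: "- int (length xs - Suc j) - 1 = int j - int (length xs)" using j' by simp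
    have e2: "(int j - int (length xs)) mod int (length xs) = int j"
      using j' by (simp add: mod_diff_right_eq[symmetric])
    have e3: "[0..<length xs] ! (length xs - Suc j) = length xs - Suc j" using j' by simp
    show "rev (map (\<lambda>i. periodic_seq xs (- (int i + 1))) [0..<length xs]) ! j = xs ! j"
      using j' by (simp add: rev_nth periodic_seq_def del: nth_upt add: e3, simp add: e e2)
  qed simp
  then show ?thesis by (simp add: back_comp_fold word_map_def)
qed

lemma back_comp_pow:
  assumes "xs \<noteq> []"
  shows "back_comp f0 f1 (periodic_seq xs) (length xs * j) = word_map f0 f1 xs ^^ j"
proof (induction j)
  case 0
  then show ?case by simp
next
  case (Suc j)
  have "length xs * Suc j = length xs + length xs * j" by simp
  then show ?case using Suc back_comp_add[of f0 f1 "periodic_seq xs" "length xs" "length xs * j"]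
    by (simp add: periodic_shift back_comp_period[OF assms])
qed

lemma fold_inv:
  assumes "\<And>i t. t \<in> T \<Longrightarrow> fmap f0 f1 i t \<in> T" "t \<in> T"
  shows "fold (fmap f0 f1) l t \<in> T"
  using assms(2) by (induction l arbitrary: t) (auto intro: assms(1))

lemma fold_fix:
  assumes "\<And>i. i \<in> set l \<Longrightarrow> fmap f0 f1 i t = t"
  shows "fold (fmap f0 f1) l t = t"
  using assms by (induction l) auto

lemma endpoints:
  fixes g :: "real \<Rightarrow> real"
  assumes ab: "a < b" and c: "continuous_on {a..b} g" and i: "inj_on g {a..b}" and s: "g ` {a..b} = {a..b}"
  shows "g (g a) = a \<and> g (g b) = b"
proof -
  have int: "g x \<noteq> a \<and> g x \<noteq> b" if "a < x" "x < b" for x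
  proof -
    have "a \<le> g a" "g a \<le> b" "a \<le> g b" "g b \<le> b" using s ab by auto
    then show ?thesis using continuous_inj_imp_mono[OF that c i] by auto
  qed
  have "a \<in> g ` {a..b}" "b \<in> g ` {a..b}" using s ab by auto
  then obtain x y where x: "x \<in> {a..b}" "g x = a" and y: "y \<in> {a..b}" "g y = b" by blast
  have "x = a \<or> x = b" using int x by force
  moreover have "y = a \<or> y = b" using int y by force
  moreover have "x \<noteq> y" using x y ab by auto
  ultimately show ?thesis using x y by auto
qed


theorem lemma3p25:
  fixes f0 f1 f0' f1' :: "real \<Rightarrow> real"
    and \<beta> lam a0 b0 a1 b1 \<alpha> \<gamma> \<gamma>' \<alpha>bar :: real and N :: nat
    and xs :: "nat list" and q :: real
  assumes
    \<comment> \<open>C^1 injective self-maps of [0,1]\<close>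
    f0_maps: "f0 ` {0..1} \<subseteq> {0..1}" and f0_inj: "inj_on f0 {0..1}"
    and f0_deriv: "\<forall>x\<in>{0..1}. (f0 has_real_derivative f0' x) (at x within {0..1})"
    and f0'_cont: "continuous_on {0..1} f0'"
    and f1_maps: "f1 ` {0..1} \<subseteq> {0..1}" and f1_inj: "inj_on f1 {0..1}"
    and f1_deriv: "\<forall>x\<in>{0..1}. (f1 has_real_derivative f1' x) (at x within {0..1})"
    and f1'_cont: "continuous_on {0..1} f1'"
    \<comment> \<open>(F0.i)\<close>
    and f0_incr: "strict_mono_on {0..1} f0"
    and f0_fix: "{x\<in>{0..1}. f0 x = x} = {0, 1}"
    and beta: "f0' 0 = \<beta>" "\<beta> > 1"
    and lambda: "f0' 1 = lam" "0 < lam" "lam < 1"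
    and f0'_bounds: "\<forall>x\<in>{0..1}. lam \<le> f0' x \<and> f0' x \<le> \<beta>"
    \<comment> \<open>(F0.ii)\<close>
    and I0: "0 < a0" "b0 < 1" "b0 = f0 a0"
    and I1: "b1 = f0 a1"
    and alpha: "\<alpha> > 1" and N: "N \<ge> 1"
    and f0N_I0: "(f0 ^^ N) ` {a0..b0} = {a1..b1}"
    and f0N_deriv: "\<forall>x\<in>{a0..b0}. \<exists>D. ((f0 ^^ N) has_real_derivative D) (at x) \<and> lam * D > \<alpha>"
    and f0_expanding: "\<forall>x\<in>{0..b0}. f0' x > 1"
    and f0_contracting: "\<forall>x\<in>{a1..1}. f0' x < 1"
    \<comment> \<open>(F1.i)\<close>
    and f1_decr: "\<forall>x\<in>{0..1}. \<forall>y\<in>{0..1}. x < y \<longrightarrow> f1 y < f1 x"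
    and gamma': "\<gamma>' = (INF x\<in>{0..1}. \<bar>f1' x\<bar>)"
    and gamma: "\<gamma> = (SUP x\<in>{0..1}. \<bar>f1' x\<bar>)" "\<gamma>' \<le> \<gamma>" "\<gamma> < 1"
    \<comment> \<open>(F1.ii)\<close>
    and alphabar: "\<alpha>bar > 1 / \<alpha>" "\<forall>x\<in>{f1 (f1 a1)..a1}. \<bar>f1' x\<bar> \<ge> \<alpha>bar"
    \<comment> \<open>(F01)\<close>
    and F01: "f1 1 = 0" "f1 ` {a1..1} \<subseteq> {0..<a0}"
      "\<forall>y\<in>{0..1}. f0 (f0 y) = b0 \<longrightarrow> {0..<y} \<subseteq> f1 ` {0..1}"
    \<comment> \<open>the periodic sequence (xs)^Z, different from 0^Z\<close>
    and xs: "xs \<noteq> []" "set xs \<subseteq> {0, 1}" "1 \<in> set xs"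
    \<comment> \<open>q is a repelling fixed point of g = f_[xs]\<close>
    and q: "q \<in> {0..1}" "word_map f0 f1 xs q = q"
    and q_rep: "\<exists>D. (word_map f0 f1 xs has_real_derivative D) (at q within {0..1}) \<and> \<bar>D\<bar> > 1"
  shows "(\<exists>a b. a < b \<and> admissible_domain f0 f1 (periodic_seq xs) = {a..b}) \<and>
         (\<exists>p p'. p \<in> admissible_domain f0 f1 (periodic_seq xs) \<and>
                 p' \<in> admissible_domain f0 f1 (periodic_seq xs) \<and> p < q \<and> q < p' \<and>
                 word_map f0 f1 xs (word_map f0 f1 xs p) = p \<and>
                 word_map f0 f1 xs (word_map f0 f1 xs p') = p')"

proof -
  define F where "F = fmap f0 f1"
  define g where "g = word_map f0 f1 xs"
  define xi where "xi = periodic_seq xs"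
  define m where "m = length xs"
  define B where "B = (\<lambda>k. back_comp f0 f1 xi k ` {0..1::real})"
  define I where "I = admissible_domain f0 f1 xi"
  have I_eq: "I = (\<Inter>k\<in>{1..}. B k)" by (simp add: I_def B_def admissible_domain_def)
  have c0: "continuous_on {0..1} f0" using f0_deriv by (intro DERIV_continuous_on) auto
  have c1: "continuous_on {0..1} f1" using f1_deriv by (intro DERIV_continuous_on) auto
  have f00: "f0 0 = 0" and f01: "f0 1 = 1" using f0_fix by (auto simp: set_eq_iff)
  have bdd: "bdd_above ((\<lambda>x. \<bar>f1' x\<bar>) ` {0..1})"
  proof -
    have "continuous_on {0..1} (\<lambda>x. \<bar>f1' x\<bar>)" using f1'_cont by (intro continuous_intros)
    then have "compact ((\<lambda>x. \<bar>f1' x\<bar>) ` {0..1::real})" by (intro compact_continuous_image) auto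
    then show ?thesis by (meson bounded_imp_bdd_above compact_imp_bounded)
  qed
  have f1_0: "f1 0 < 1"
  proof -
    have "\<exists>x\<in>{0<..<1}. f1 1 - f1 0 = (\<lambda>h. f1' x * h) (1 - 0)"
      by (rule mvt_simple) (use f1_deriv in \<open>auto simp: has_field_derivative_def\<close>)
    then obtain x where x: "x \<in> {0<..<1}" "f1 1 - f1 0 = f1' x" by auto
    have "x \<in> {0..1}" using x by auto
    then have "\<bar>f1' x\<bar> \<le> \<gamma>" unfolding gamma(1) using bdd by (rule cSUP_upper)
    then show ?thesis using x(2) F01(1) gamma(3) by linarith
  qed
  have "f1 1 < f1 0" using f1_decr by (meson atLeastAtMost_iff order_refl zero_le_one zero_less_one)
  then have f10: "0 < f1 0" using F01(1) by simp
  note fp = fold_props[OF c0 f0_maps f0_inj c1 f1_maps f1_inj]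
  have gc: "continuous_on {0..1} g" and gm: "g ` {0..1} \<subseteq> {0..1}" and gi: "inj_on g {0..1}"
    using fp[of xs] by (auto simp: g_def word_map_def)
  have bcm: "back_comp f0 f1 xi k ` {0..1} \<subseteq> {0..1}" for k
    using fp by (simp add: back_comp_fold)
  have bcc: "continuous_on {0..1} (back_comp f0 f1 xi k)" for k
    using fp by (simp add: back_comp_fold)
  define T where "T = {t::real. 0 < t \<and> t < 1}"
  have FT: "F i t \<in> T" if "t \<in> T" for i t
  proof (cases "i = 0")
    case True
    have "f0 0 < f0 t" by (rule strict_mono_onD[OF f0_incr]) (use that in \<open>auto simp: T_def\<close>)
    moreover have "f0 t < f0 1" by (rule strict_mono_onD[OF f0_incr]) (use that in \<open>auto simp: T_def\<close>)
    ultimately show ?thesis using True f00 f01 by (simp add: F_def fmap_def T_def)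
  next
    case False
    have "0 < t" "t < 1" using that by (auto simp: T_def)
    then have "f1 1 < f1 t" "f1 t < f1 0" using f1_decr by auto
    then show ?thesis using False F01(1) f1_0 by (simp add: F_def fmap_def T_def)
  qed
  have FT0: "F i t \<in> insert 0 T" if "t \<in> insert 0 T" for i t
  proof (cases "t = 0")
    case True
    then show ?thesis using f00 f10 f1_0 by (auto simp: F_def fmap_def T_def)
  next
    case False
    then show ?thesis using FT that by auto
  qed
  have gq: "g x \<noteq> x" if "x = 0 \<or> x = 1" for x
  proof -
    obtain ys zs where yz: "xs = ys @ 1 # zs" "1 \<notin> set ys" using xs(3) by (meson split_list_first)
    have "set ys \<subseteq> {0}" using yz xs(2) by auto
    then have "fold F ys x = x" using that f00 f01
      by (intro fold_fix[of ys f0 f1 x, folded F_def]) (auto simp: F_def fmap_def)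
    then have gx: "g x = fold F zs (f1 x)" using yz by (simp add: g_def word_map_def F_def fmap_def)
    show ?thesis
    proof (cases "x = 0")
      case True
      have "f1 x \<in> T" using True f10 f1_0 by (simp add: T_def)
      then have "g x \<in> T" unfolding gx F_def using fold_inv[of T f0 f1 "f1 x" zs] FT[unfolded F_def] by blast
      then show ?thesis using True by (auto simp: T_def)
    next
      case False
      then have "f1 x \<in> insert 0 T" using that F01(1) by simp
      then have "g x \<in> insert 0 T" unfolding gx F_def using fold_inv[of "insert 0 T" f0 f1 "f1 x" zs] FT0[unfolded F_def] by blast
      then show ?thesis using False that by (auto simp: T_def)
    qed
  qed
  have q0: "0 < q" and q1: "q < 1" using q gq[of q] g_def by (auto simp: le_less)
  have B0: "B 0 = {0..1}" by (simp add: B_def)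
  have Bdec: "B (Suc k) \<subseteq> B k" for k
  proof -
    have "B (Suc k) = back_comp f0 f1 xi k ` (fmap f0 f1 (xi (- (int k + 1))) ` {0..1})"
      by (simp add: B_def image_comp)
    also have "\<dots> \<subseteq> B k" unfolding B_def using f0_maps f1_maps by (intro image_mono) (auto simp: fmap_def)
    finally show ?thesis .
  qed
  have Bmono: "B k' \<subseteq> B k" if "k \<le> k'" for k k'
    using lift_Suc_antimono_le[of B, OF Bdec that] .
  have m1: "m \<ge> 1" using xs(1) by (simp add: m_def Suc_le_eq)
  have Bpow: "B (m * j) = (g ^^ j) ` {0..1}" for j
    using back_comp_pow[OF xs(1)] by (simp add: B_def m_def xi_def g_def)
  have gpow01: "(g ^^ j) ` {0..1} \<subseteq> {0..1}" for j
    using Bpow[of j] Bmono[of 0 "m*j"] B0 by auto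
  obtain D where hD: "(g has_real_derivative D) (at q within {0..1})" "\<bar>D\<bar> > 1"
    using q_rep g_def by auto
  define s :: real where "s = (if D > 1 then 1 else -1)"
  have sD: "1 < s * D" "s = 1 \<or> s = -1" using hD(2) by (auto simp: s_def)
  have "((\<lambda>y. s * ((g y - g q) / (y - q))) \<longlongrightarrow> s * D) (at q within {0..1})"
    using hD(1) by (intro tendsto_mult_left) (simp add: has_field_derivative_iff)
  then have "eventually (\<lambda>y. 1 < s * ((g y - g q) / (y - q))) (at q within {0..1})"
    using sD(1) by (rule order_tendstoD(1))
  then obtain d where d: "d > 0" "\<And>y. y \<in> {0..1} \<Longrightarrow> y \<noteq> q \<Longrightarrow> dist y q < d \<Longrightarrow> 1 < s * ((g y - g q) / (y - q))"
    unfolding eventually_at by auto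
  define \<delta> where "\<delta> = min (d/2) (min q (1-q))"
  have \<delta>: "\<delta> > 0" "q - \<delta> \<ge> 0" "q + \<delta> \<le> 1" "\<delta> < d"
    using d q0 q1 by (auto simp: \<delta>_def)
  define K where "K = {q-\<delta>..q+\<delta>}"
  have K01: "K \<subseteq> {0..1}" using \<delta> by (auto simp: K_def)
  have gqq: "g q = q" using q g_def by simp
  have lft: "1 < s * ((g (q-\<delta>) - q) / (- \<delta>))" using d(2)[of "q-\<delta>"] \<delta> gqq by (auto simp: dist_real_def)
  have rgt: "1 < s * ((g (q+\<delta>) - q) / \<delta>)" using d(2)[of "q+\<delta>"] \<delta> gqq by (auto simp: dist_real_def)
  have lft': "s * (g (q-\<delta>) - q) < - \<delta>"
  proof -
    have "s * ((g (q-\<delta>) - q) / (- \<delta>)) = - (s * (g (q-\<delta>) - q)) / \<delta>" by simp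
    with lft \<delta>(1) show ?thesis by (simp add: divide_less_eq)
  qed
  have rgt': "s * (g (q+\<delta>) - q) > \<delta>"
  proof -
    have "s * ((g (q+\<delta>) - q) / \<delta>) = (s * (g (q+\<delta>) - q)) / \<delta>" by simp
    with rgt \<delta>(1) show ?thesis by (simp add: less_divide_eq)
  qed
  have gcK: "continuous_on K g" using gc K01 continuous_on_subset by blast
  have KgK: "K \<subseteq> g ` K"
  proof
    fix z assume z: "z \<in> K"
    from sD(2) show "z \<in> g ` K"
    proof
      assume s1: "s = 1"
      have "g (q-\<delta>) \<le> z" "z \<le> g (q+\<delta>)" using lft' rgt' z s1 by (auto simp: K_def)
      then obtain x where "q-\<delta> \<le> x" "x \<le> q+\<delta>" "g x = z"
        using IVT'[of g "q-\<delta>" z "q+\<delta>"] gcK \<delta>(1) by (auto simp: K_def)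
      then show ?thesis by (auto simp: K_def)
    next
      assume s1: "s = -1"
      have "g (q+\<delta>) \<le> z" "z \<le> g (q-\<delta>)" using lft' rgt' z s1 by (auto simp: K_def)
      then obtain x where "q-\<delta> \<le> x" "x \<le> q+\<delta>" "g x = z"
        using IVT2'[of g "q+\<delta>" z "q-\<delta>"] gcK \<delta>(1) by (auto simp: K_def)
      then show ?thesis by (auto simp: K_def)
    qed
  qed
  have Kpow: "K \<subseteq> (g ^^ j) ` K" for j
  proof (induction j)
    case 0 then show ?case by simp
  next
    case (Suc j)
    have "K \<subseteq> g ` K" by (rule KgK)
    also have "\<dots> \<subseteq> g ` ((g ^^ j) ` K)" using Suc by (rule image_mono)
    also have "\<dots> = (g ^^ Suc j) ` K" by (simp add: image_comp)
    finally show ?case .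
  qed
  have KI: "K \<subseteq> I"
  proof -
    have "K \<subseteq> B k" if "k \<ge> 1" for k
    proof -
      have "K \<subseteq> (g ^^ k) ` K" by (rule Kpow)
      also have "\<dots> \<subseteq> (g ^^ k) ` {0..1}" using K01 by (rule image_mono)
      also have "\<dots> = B (m * k)" by (rule Bpow[symmetric])
      also have "\<dots> \<subseteq> B k" using m1 by (intro Bmono) simp
      finally show ?thesis .
    qed
    then show ?thesis unfolding I_eq by auto
  qed
  have Bcomp: "compact (B k)" for k
    unfolding B_def using bcc by (intro compact_continuous_image) auto
  have Bconn: "connected (B k)" for k
    unfolding B_def using bcc by (intro connected_continuous_image) auto
  have Iconn: "connected I"
    unfolding I_eq
  proof (rule connected_chain_gen[of "B 1"])
    show "B 1 \<in> B ` {1..}" by simp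
    show "compact (B 1)" by (rule Bcomp)
    show "closed T \<and> connected T" if "T \<in> B ` {1..}" for T
      using that Bcomp Bconn compact_imp_closed by blast
    show "S \<subseteq> T \<or> T \<subseteq> S" if "S \<in> B ` {1..} \<and> T \<in> B ` {1..}" for S T
    proof -
      from that obtain i j where ij: "S = B i" "T = B j" by auto
      show ?thesis using Bmono[of i j] Bmono[of j i] nat_le_linear[of i j] ij by blast
    qed
  qed
  have Icomp: "compact I"
  proof -
    have "closed I" unfolding I_eq using Bcomp compact_imp_closed by (intro closed_INT) blast
    moreover have "I \<subseteq> B 1" unfolding I_eq by auto
    then have "I = B 1 \<inter> I" by blast
    ultimately show ?thesis using compact_Int_closed[OF Bcomp[of 1]] by metis
  qed
  obtain a b where ab: "I = {a..b}" using Iconn Icomp connected_compact_interval_1 by meson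
  have aq: "a < q" and qb: "q < b" using KI \<delta>(1) unfolding ab K_def by auto
  have I01: "I \<subseteq> {0..1}" unfolding I_eq using Bmono[of 0 1] B0 by auto
  have gI: "g ` I = I"
  proof
    show "g ` I \<subseteq> I"
    proof
      fix y assume "y \<in> g ` I"
      then obtain x where x: "x \<in> I" "y = g x" by auto
      have "y \<in> B k" if "k \<ge> 1" for k
      proof -
        have mk: "m * k \<ge> 1" using m1 that by simp
        have "x \<in> B (m * k)" using x(1) mk unfolding I_eq by blast
        then have "y \<in> g ` ((g ^^ k) ` {0..1})" using x(2) Bpow by auto
        then have "y \<in> B (m * Suc k)" using Bpow[of "Suc k"] by (simp add: image_comp)
        moreover have "k \<le> m * Suc k" using m1 by (simp add: le_SucI trans_le_add2)
        ultimately show ?thesis using Bmono[of k "m * Suc k"] by blast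
      qed
      then show "y \<in> I" unfolding I_eq by auto
    qed
    show "I \<subseteq> g ` I"
    proof
      fix y assume y: "y \<in> I"
      have yB: "y \<in> g ` ((g ^^ j) ` {0..1})" for j
      proof -
        have "y \<in> B (m * Suc j)" using y m1 unfolding I_eq by auto
        then show ?thesis using Bpow[of "Suc j"] by (simp add: image_comp)
      qed
      obtain x0 where x0: "x0 \<in> {0..1}" "y = g x0" using yB[of 0] by auto
      have "x0 \<in> (g ^^ j) ` {0..1}" for j
      proof -
        obtain x where x: "x \<in> (g ^^ j) ` {0..1}" "y = g x" using yB[of j] by auto
        have "x \<in> {0..1}" using x(1) gpow01[of j] by blast
        then have "x = x0" using gi x0 x(2) by (auto dest: inj_onD)
        then show ?thesis using x by simp
      qed
      then have "x0 \<in> B k" if "k \<ge> 1" for k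
      proof -
        have "x0 \<in> B (m * k)" using Bpow \<open>\<And>j. x0 \<in> (g ^^ j) ` {0..1}\<close> by simp
        moreover have "k \<le> m * k" using m1 by simp
        ultimately show ?thesis using Bmono[of k "m * k"] by blast
      qed
      then have "x0 \<in> I" unfolding I_eq by blast
      then show "y \<in> g ` I" using x0 by auto
    qed
  qed
  have abl: "a < b" using aq qb by simp
  have "g (g a) = a \<and> g (g b) = b"
  proof (rule endpoints[OF abl])
    show "continuous_on {a..b} g" using gc I01 ab continuous_on_subset by blast
    show "inj_on g {a..b}" using gi I01 ab inj_on_subset by blast
    show "g ` {a..b} = {a..b}" using gI ab by simp
  qed
  then show ?thesis
    using abl aq qb unfolding ab[unfolded I_def xi_def] g_def
    by (intro conjI exI[of _ a] exI[of _ b]) auto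
qed

end
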